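(* Let $\mathcal{X}=\mathbb{R}^d$ be the instance space and let $h:\mathcal{X}\to\{0,1\}$ be a fixed (oracle) instance-labeling function. For a finite bag (set) of instances $B\subset\mathcal{X}$, define the oracle bag label $\phi^*(B)=\max_{\mathbf{z}\in B} h(\mathbf{z})$ (the Boolean OR of the instance labels, with $\phi^*(\emptyset)=0$). Let $X$ be a random bag, and let $Y=\phi^*(X)$ be its label. Fix a candidate instance $\mathbf{x}\in\mathcal{X}$. Let $T\in\{0,1\}$ be a treatment indicator independent of $X$ with $0<P(T=1)<1$, and define the post-treatment label $$Y^*=\begin{cases}\phi^*(X\cup\{\mathbf{x}\}) & \text{if } T=1,\\ \phi^*(X\setminus\{\mathbf{x}\}) & \text{if } T=0.\end{cases}$$ Define the causal effect $\tau(\mathbf{x})=\mathbb{E}[Y^*\mid T=1]-\mathbb{E}[Y^*\mid T=0]$. Then $$\tau(\mathbf{x}) = P(Y=0)\cdot \mathbb{E}[Y^*\mid Y=0,\,T=1] + c,$$ where $c$ is the probability that the bag $X$ contains one and only one positive instance and that instance is $\mathbf{x}$, i.e. $c=P\big(\mathbf{x}\in X,\ h(\mathbf{x})=1,\ h(\mathbf{z})=0 \text{ for all } \mathbf{z}\in X\setminus\{\mathbf{x}\}\big)$.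
   Context: Multi-instance learning setting under the standard multi-instance assumption: a bag is positive (label 1) iff at least one of its instances is positive, and negative iff all instances are negative. "Adding $\mathbf{x}$ to a bag" is regarded as the treatment ($T=1$) and "removing $\mathbf{x}$ from (or not including it in) a bag" as the control ($T=0$); $Y^*$ is the bag label after treatment as given by the oracle classifier $\phi^*$. The term $P(Y=0)\cdot\mathbb{E}[Y^*\mid Y=0,T=1]$ is interpreted as $0$ when $P(Y=0)=0$. *)

theory Defs
  imports "HOL-Probability.Probability"
begin

definition phi_star :: "('a \<Rightarrow> nat) \<Rightarrow> 'a set \<Rightarrow> nat" where
  "phi_star h B = (if B = {} then 0 else Max (h ` B))"

definition Ystar :: "('a \<Rightarrow> nat) \<Rightarrow> 'a \<Rightarrow> 'a set \<Rightarrow> bool \<Rightarrow> nat" where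
  "Ystar h x B t = (if t then phi_star h (insert x B) else phi_star h (B - {x}))"

text \<open>Elementary conditional expectation given an event A: E[f | A] = E[f 1_A] / P(A)
  (equal to 0 when P(A) = 0, by the convention x / 0 = 0).\<close>
definition cond_exp_event :: "'w measure \<Rightarrow> ('w \<Rightarrow> real) \<Rightarrow> 'w set \<Rightarrow> real" where
  "cond_exp_event M f A = (\<integral>\<omega>. f \<omega> * indicator A \<omega> \<partial>M) / measure M A"

end

theory Submission
  imports Defs
begin

lemma phi_star_fin:
  assumes "finite B" "\<And>z. h z \<le> (1::nat)"
  shows "phi_star h B = (if \<exists>z\<in>B. h z = 1 then 1 else 0)"
proof (cases "B = {}")
  case True then show ?thesis by (simp add: phi_star_def)
next
  case False
  have le: "Max (h ` B) \<le> 1" using assms False by (simp add: Max_le_iff)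
  show ?thesis
  proof (cases "\<exists>z\<in>B. h z = 1")
    case True
    then obtain z where "z \<in> B" "h z = 1" by blast
    then have "1 \<le> Max (h ` B)" using assms(1) by (metis Max_ge finite_imageI imageI)
    with le True False show ?thesis by (simp add: phi_star_def)
  next
    case F: False
    have "\<forall>z\<in>B. h z = 0" using F assms(2) by (metis le_antisym less_one not_le)
    then have "h ` B = {0}" using False by auto
    with F False show ?thesis by (simp add: phi_star_def)
  qed
qed

theorem theorem1:
  fixes M :: "'w measure" and N :: "(real ^ 'd) set measure"
    and X :: "'w \<Rightarrow> (real ^ 'd) set" and T :: "'w \<Rightarrow> bool"
    and h :: "real ^ 'd \<Rightarrow> nat" and x :: "real ^ 'd"
  assumes "prob_space M"
    and "\<And>z. h z \<le> 1"
    and "X \<in> M \<rightarrow>\<^sub>M N"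
    and "T \<in> M \<rightarrow>\<^sub>M count_space UNIV"
    and "\<And>A t. A \<in> sets N \<Longrightarrow>
       measure M {\<omega> \<in> space M. X \<omega> \<in> A \<and> T \<omega> = t}
       = measure M {\<omega> \<in> space M. X \<omega> \<in> A} * measure M {\<omega> \<in> space M. T \<omega> = t}"
    and "\<And>\<omega>. \<omega> \<in> space M \<Longrightarrow> finite (X \<omega>)"
    and "0 < measure M {\<omega> \<in> space M. T \<omega>}"
    and "measure M {\<omega> \<in> space M. T \<omega>} < 1"
    and "{B. phi_star h (insert x B) = 1} \<in> sets N"
    and "{B. phi_star h (B - {x}) = 1} \<in> sets N"
    and "{B. phi_star h B = 0} \<in> sets N"
    and "{B. x \<in> B \<and> h x = 1 \<and> (\<forall>z \<in> B - {x}. h z = 0)} \<in> sets N"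
  shows "cond_exp_event M (\<lambda>\<omega>. real (Ystar h x (X \<omega>) (T \<omega>))) {\<omega> \<in> space M. T \<omega>}
         - cond_exp_event M (\<lambda>\<omega>. real (Ystar h x (X \<omega>) (T \<omega>))) {\<omega> \<in> space M. \<not> T \<omega>}
       = measure M {\<omega> \<in> space M. phi_star h (X \<omega>) = 0}
           * cond_exp_event M (\<lambda>\<omega>. real (Ystar h x (X \<omega>) (T \<omega>)))
               {\<omega> \<in> space M. phi_star h (X \<omega>) = 0 \<and> T \<omega>}
         + measure M {\<omega> \<in> space M. x \<in> X \<omega> \<and> h x = 1 \<and> (\<forall>z \<in> X \<omega> - {x}. h z = 0)}"
proof -
  interpret prob_space M by fact
  define S where "S = space M"
  define N1 where "N1 = {B. phi_star h (insert x B) = 1}"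
  define N0 where "N0 = {B. phi_star h (B - {x}) = 1}"
  define NZ where "NZ = {B. phi_star h B = 0}"
  define NC where "NC = {B. x \<in> B \<and> h x = 1 \<and> (\<forall>z \<in> B - {x}. h z = 0)}"
  define p where "p = measure M {\<omega> \<in> space M. T \<omega>}"
  have N1: "N1 \<in> sets N" and N0: "N0 \<in> sets N" and NZ: "NZ \<in> sets N" and NC: "NC \<in> sets N"
    using assms(9-12) by (auto simp: N1_def N0_def NZ_def NC_def)
  have N1Z: "N1 \<inter> NZ \<in> sets N" using N1 NZ by auto
  have meas: "{\<omega>\<in>S. X \<omega> \<in> A} \<in> sets M" if "A \<in> sets N" for A
  proof -
    have "{\<omega>\<in>S. X \<omega> \<in> A} = X -` A \<inter> space M" by (auto simp: S_def)
    then show ?thesis using measurable_sets[OF assms(3) that] by simp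
  qed
  have pF: "measure M {\<omega> \<in> space M. T \<omega> = False} = 1 - p"
  proof -
    have "{\<omega> \<in> space M. T \<omega> = False} = space M - {\<omega> \<in> space M. T \<omega>}" by auto
    moreover have "{\<omega> \<in> space M. T \<omega>} \<in> sets M"
      using assms(4) by measurable
    ultimately show ?thesis by (simp add: prob_compl p_def)
  qed
  have pT: "measure M {\<omega> \<in> space M. T \<omega> = True} = p" by (simp add: p_def)
  have p0: "0 < p" "p < 1" using assms(7,8) by (auto simp: p_def)
  have indT: "measure M {\<omega> \<in> space M. X \<omega> \<in> A \<and> T \<omega> = True}
      = measure M {\<omega>\<in>S. X \<omega> \<in> A} * p" if "A \<in> sets N" for A
    using assms(5)[OF that, of True] pT unfolding S_def by simp
  have indF: "measure M {\<omega> \<in> space M. X \<omega> \<in> A \<and> T \<omega> = False}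
      = measure M {\<omega>\<in>S. X \<omega> \<in> A} * (1 - p)" if "A \<in> sets N" for A
    using assms(5)[OF that, of False] pF unfolding S_def by simp
  have mT: "{\<omega> \<in> space M. X \<omega> \<in> A \<and> T \<omega> = True} \<in> sets M" if "A \<in> sets N" for A
  proof -
    have "{\<omega> \<in> space M. T \<omega>} \<in> sets M" using assms(4) by measurable
    then have "{\<omega>\<in>S. X \<omega> \<in> A} \<inter> {\<omega> \<in> space M. T \<omega>} \<in> sets M" using meas[OF that] by auto
    moreover have "{\<omega>\<in>S. X \<omega> \<in> A} \<inter> {\<omega> \<in> space M. T \<omega>} = {\<omega> \<in> space M. X \<omega> \<in> A \<and> T \<omega> = True}"
      by (auto simp: S_def)
    ultimately show ?thesis by simp
  qed
  have mF: "{\<omega> \<in> space M. X \<omega> \<in> A \<and> T \<omega> = False} \<in> sets M" if "A \<in> sets N" for A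
  proof -
    have "{\<omega> \<in> space M. \<not> T \<omega>} \<in> sets M" using assms(4) by measurable
    then have "{\<omega>\<in>S. X \<omega> \<in> A} \<inter> {\<omega> \<in> space M. \<not> T \<omega>} \<in> sets M" using meas[OF that] by auto
    moreover have "{\<omega>\<in>S. X \<omega> \<in> A} \<inter> {\<omega> \<in> space M. \<not> T \<omega>} = {\<omega> \<in> space M. X \<omega> \<in> A \<and> T \<omega> = False}"
      by (auto simp: S_def)
    ultimately show ?thesis by simp
  qed
  have phi: "\<And>B. finite B \<Longrightarrow> phi_star h B = (if \<exists>z\<in>B. h z = 1 then 1 else 0)"
    using phi_star_fin assms(2) by blast
  let ?f = "\<lambda>\<omega>. real (Ystar h x (X \<omega>) (T \<omega>))"
  have i1: "(\<integral>\<omega>. ?f \<omega> * indicator {\<omega> \<in> space M. T \<omega>} \<omega> \<partial>M)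
      = measure M {\<omega> \<in> space M. X \<omega> \<in> N1 \<and> T \<omega> = True}"
  proof -
    have "(\<integral>\<omega>. ?f \<omega> * indicator {\<omega> \<in> space M. T \<omega>} \<omega> \<partial>M)
        = (\<integral>\<omega>. indicator {\<omega> \<in> space M. X \<omega> \<in> N1 \<and> T \<omega> = True} \<omega> \<partial>M)"
    proof (rule Bochner_Integration.integral_cong[OF refl])
      fix \<omega> assume w: "\<omega> \<in> space M"
      then have "finite (insert x (X \<omega>))" using assms(6) by auto
      then show "?f \<omega> * indicator {\<omega> \<in> space M. T \<omega>} \<omega>
          = indicator {\<omega> \<in> space M. X \<omega> \<in> N1 \<and> T \<omega> = True} \<omega>"
        using w phi[of "insert x (X \<omega>)"] by (auto simp: Ystar_def N1_def indicator_def)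
    qed
    also have "\<dots> = measure M {\<omega> \<in> space M. X \<omega> \<in> N1 \<and> T \<omega> = True}"
      using mT[OF N1] by simp
    finally show ?thesis .
  qed
  have c1: "cond_exp_event M ?f {\<omega> \<in> space M. T \<omega>} = measure M {\<omega>\<in>S. X \<omega> \<in> N1}"
    unfolding cond_exp_event_def i1 using indT[OF N1] p0 by (simp add: p_def)
  have i0: "(\<integral>\<omega>. ?f \<omega> * indicator {\<omega> \<in> space M. \<not> T \<omega>} \<omega> \<partial>M)
      = measure M {\<omega> \<in> space M. X \<omega> \<in> N0 \<and> T \<omega> = False}"
  proof -
    have "(\<integral>\<omega>. ?f \<omega> * indicator {\<omega> \<in> space M. \<not> T \<omega>} \<omega> \<partial>M)
        = (\<integral>\<omega>. indicator {\<omega> \<in> space M. X \<omega> \<in> N0 \<and> T \<omega> = False} \<omega> \<partial>M)"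
    proof (rule Bochner_Integration.integral_cong[OF refl])
      fix \<omega> assume w: "\<omega> \<in> space M"
      then have "finite (X \<omega> - {x})" using assms(6) by auto
      then show "?f \<omega> * indicator {\<omega> \<in> space M. \<not> T \<omega>} \<omega>
          = indicator {\<omega> \<in> space M. X \<omega> \<in> N0 \<and> T \<omega> = False} \<omega>"
        using w phi[of "X \<omega> - {x}"] by (auto simp: Ystar_def N0_def indicator_def)
    qed
    also have "\<dots> = measure M {\<omega> \<in> space M. X \<omega> \<in> N0 \<and> T \<omega> = False}"
      using mF[OF N0] by simp
    finally show ?thesis .
  qed
  have e0: "{\<omega> \<in> space M. \<not> T \<omega>} = {\<omega> \<in> space M. T \<omega> = False}" by auto
  have c0: "cond_exp_event M ?f {\<omega> \<in> space M. \<not> T \<omega>} = measure M {\<omega>\<in>S. X \<omega> \<in> N0}"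
    proof -
    have a: "measure M {\<omega> \<in> space M. \<not> T \<omega>} = 1 - p" using pF by simp
    show ?thesis unfolding cond_exp_event_def i0 a indF[OF N0] using p0 by simp
  qed
  have iZ: "(\<integral>\<omega>. ?f \<omega> * indicator {\<omega> \<in> space M. phi_star h (X \<omega>) = 0 \<and> T \<omega>} \<omega> \<partial>M)
      = measure M {\<omega> \<in> space M. X \<omega> \<in> N1 \<inter> NZ \<and> T \<omega> = True}"
  proof -
    have "(\<integral>\<omega>. ?f \<omega> * indicator {\<omega> \<in> space M. phi_star h (X \<omega>) = 0 \<and> T \<omega>} \<omega> \<partial>M)
        = (\<integral>\<omega>. indicator {\<omega> \<in> space M. X \<omega> \<in> N1 \<inter> NZ \<and> T \<omega> = True} \<omega> \<partial>M)"
    proof (rule Bochner_Integration.integral_cong[OF refl])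
      fix \<omega> assume w: "\<omega> \<in> space M"
      then have "finite (insert x (X \<omega>))" using assms(6) by auto
      then show "?f \<omega> * indicator {\<omega> \<in> space M. phi_star h (X \<omega>) = 0 \<and> T \<omega>} \<omega>
          = indicator {\<omega> \<in> space M. X \<omega> \<in> N1 \<inter> NZ \<and> T \<omega> = True} \<omega>"
        using w phi[of "insert x (X \<omega>)"] by (auto simp: Ystar_def N1_def NZ_def indicator_def)
    qed
    also have "\<dots> = measure M {\<omega> \<in> space M. X \<omega> \<in> N1 \<inter> NZ \<and> T \<omega> = True}"
      using mT[OF N1Z] by simp
    finally show ?thesis .
  qed
  have eZ: "{\<omega> \<in> space M. phi_star h (X \<omega>) = 0 \<and> T \<omega>} = {\<omega> \<in> space M. X \<omega> \<in> NZ \<and> T \<omega> = True}"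
    by (auto simp: NZ_def)
  have sub: "{\<omega>\<in>S. X \<omega> \<in> N1 \<inter> NZ} \<subseteq> {\<omega>\<in>S. X \<omega> \<in> NZ}" by auto
  have le: "measure M {\<omega>\<in>S. X \<omega> \<in> N1 \<inter> NZ} \<le> measure M {\<omega>\<in>S. X \<omega> \<in> NZ}"
    using finite_measure_mono[OF sub meas[OF NZ]] .
  have eZ2: "{\<omega> \<in> space M. phi_star h (X \<omega>) = 0} = {\<omega>\<in>S. X \<omega> \<in> NZ}" by (auto simp: NZ_def S_def)
  have cZ: "measure M {\<omega> \<in> space M. phi_star h (X \<omega>) = 0}
      * cond_exp_event M ?f {\<omega> \<in> space M. phi_star h (X \<omega>) = 0 \<and> T \<omega>}
      = measure M {\<omega>\<in>S. X \<omega> \<in> N1 \<inter> NZ}"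
  proof (cases "measure M {\<omega>\<in>S. X \<omega> \<in> NZ} = 0")
    case True
    have z: "measure M {\<omega>\<in>S. X \<omega> \<in> N1 \<inter> NZ} = 0"
      using le True measure_nonneg[of M "{\<omega>\<in>S. X \<omega> \<in> N1 \<inter> NZ}"] by linarith
    show ?thesis unfolding cond_exp_event_def eZ2 z True by simp
  next
    case False
    show ?thesis unfolding cond_exp_event_def iZ unfolding eZ eZ2 indT[OF N1Z] indT[OF NZ]
      using p0 False by (simp add: field_simps)
  qed
  have eC: "{\<omega> \<in> space M. x \<in> X \<omega> \<and> h x = 1 \<and> (\<forall>z \<in> X \<omega> - {x}. h z = 0)} = {\<omega>\<in>S. X \<omega> \<in> NC}"
    by (auto simp: NC_def S_def)
  have h01: "\<And>z. h z = 0 \<or> h z = 1" using assms(2) by (metis le_neq_implies_less less_one)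
  have hpos: "\<And>z. (0 < h z) = (h z = 1)" using h01 by (metis less_numeral_extra(3) zero_less_one)
  have s1: "{\<omega>\<in>S. X \<omega> \<in> N1} = {\<omega>\<in>S. X \<omega> \<in> N1 \<inter> NZ} \<union> (S - {\<omega>\<in>S. X \<omega> \<in> NZ})"
  proof -
    have "\<And>\<omega>. \<omega> \<in> S \<Longrightarrow> X \<omega> \<notin> NZ \<Longrightarrow> X \<omega> \<in> N1"
    proof -
      fix \<omega> assume "\<omega> \<in> S" "X \<omega> \<notin> NZ"
      then have f: "finite (X \<omega>)" "X \<omega> \<notin> NZ" using assms(6) S_def by auto
      then show "X \<omega> \<in> N1" using phi[OF f(1)] phi[of "insert x (X \<omega>)"] by (auto simp: NZ_def N1_def split: if_splits)
    qed
    then show ?thesis by auto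
  qed
  have s2: "S - {\<omega>\<in>S. X \<omega> \<in> NZ} = {\<omega>\<in>S. X \<omega> \<in> N0} \<union> {\<omega>\<in>S. X \<omega> \<in> NC}"
  proof -
    have "X \<omega> \<notin> NZ \<longleftrightarrow> X \<omega> \<in> N0 \<or> X \<omega> \<in> NC" if "\<omega> \<in> S" for \<omega>
    proof -
      have f: "finite (X \<omega>)" "finite (X \<omega> - {x})" using assms(6) S_def that by auto
      show ?thesis using phi[OF f(1)] phi[OF f(2)] h01 by (auto simp: hpos NZ_def N0_def NC_def split: if_splits)
    qed
    then show ?thesis by auto
  qed
  have d2: "{\<omega>\<in>S. X \<omega> \<in> N0} \<inter> {\<omega>\<in>S. X \<omega> \<in> NC} = {}"
  proof -
    have "\<not> (X \<omega> \<in> N0 \<and> X \<omega> \<in> NC)" if "\<omega> \<in> S" for \<omega>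
    proof -
      have f: "finite (X \<omega> - {x})" using assms(6) S_def that by auto
      show ?thesis using phi[OF f] by (auto simp: hpos N0_def NC_def split: if_splits)
    qed
    then show ?thesis by auto
  qed
  have P1: "measure M {\<omega>\<in>S. X \<omega> \<in> N1} = measure M {\<omega>\<in>S. X \<omega> \<in> N1 \<inter> NZ} + measure M (S - {\<omega>\<in>S. X \<omega> \<in> NZ})"
    unfolding s1 apply (rule finite_measure_Union)
    using meas[OF N1Z] meas[OF NZ] S_def by auto
  have P2: "measure M (S - {\<omega>\<in>S. X \<omega> \<in> NZ}) = measure M {\<omega>\<in>S. X \<omega> \<in> N0} + measure M {\<omega>\<in>S. X \<omega> \<in> NC}"
    unfolding s2 by (rule finite_measure_Union[OF meas[OF N0] meas[OF NC] d2])
  show ?thesis unfolding c1 c0 cZ eC using P1 P2 by simp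
qed

end
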